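(* Let $H(s)=K\,\frac{\prod_{i=1}^{m}(s-z_i)}{\prod_{i=1}^{n}(s-p_i)}$ be a rational function with real coefficients, where $K\neq 0$ is real, $z=(z_1,\dots,z_m)\in\mathbb{C}^m$ are its zeros and $p=(p_1,\dots,p_n)\in\mathbb{C}^n$ its poles. Then $H$ is logarithmically completely monotonic if and only if $K>0$ and $$\sum_{i=1}^n \exp(p_i t)\;\geq\;\sum_{i=1}^m \exp(z_i t)\qquad\text{for all } t\in[0,+\infty).$$
   Context: Let $\sigma(H)=\max_i \operatorname{Re}(p_i)$ be the pole abscissa. A function $H$ is logarithmically completely monotonic (LCM) on an interval $I\subseteq\mathbb{R}$ if $H(s)>0$ and $(-1)^k[\log H(s)]^{(k)}\geq 0$ for all $k\in\mathbb{N}=\{1,2,\dots\}$ and all $s\in I$, where $^{(k)}$ denotes the $k$-th derivative. Throughout, "$H$ is LCM" means LCM on $I=(\sigma(H),+\infty)$. *)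

theory Defs
  imports "HOL-Analysis.Analysis" "HOL-Computational_Algebra.Polynomial"
begin

definition rat_fun :: "real \<Rightarrow> complex list \<Rightarrow> complex list \<Rightarrow> complex \<Rightarrow> complex" where
  "rat_fun K z p s = complex_of_real K * (\<Prod>zi\<leftarrow>z. s - zi) / (\<Prod>pi\<leftarrow>p. s - pi)"

definition roots_poly :: "complex list \<Rightarrow> complex poly" where
  "roots_poly r = (\<Prod>ri\<leftarrow>r. [:- ri, 1:])"

definition abscissa_interval :: "complex list \<Rightarrow> real set" where
  "abscissa_interval p = (if p = [] then UNIV else {Max (Re ` set p) <..})"

definition LCM_on :: "(real \<Rightarrow> real) \<Rightarrow> real set \<Rightarrow> bool" where
  "LCM_on f I \<longleftrightarrow> (\<forall>s\<in>I. f s > 0) \<and>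
     (\<forall>k::nat. k \<ge> 1 \<longrightarrow> (\<forall>s\<in>I. (-1) ^ k * (deriv ^^ k) (\<lambda>x. ln (f x)) s \<ge> 0))"

end

theory Submission
  imports Defs
begin

lemma Re_comp_deriv:
  assumes "(h has_field_derivative D) (at (complex_of_real x))"
  shows "((\<lambda>x. Re (h (complex_of_real x))) has_real_derivative Re D) (at x)"
proof -
  have "((h \<circ> complex_of_real) has_vector_derivative (1 * D)) (at x)"
    by (rule field_vector_diff_chain_at[of complex_of_real 1 x h D, OF _ assms])
       (auto intro!: derivative_eq_intros simp: has_vector_derivative_def fun_eq_iff scaleR_conv_of_real)
  then have "((\<lambda>x. Re ((h \<circ> complex_of_real) x)) has_field_derivative Re (1*D)) (at x)"
    by (rule has_field_derivative_Re)
  then show ?thesis by (simp add: o_def)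
qed

definition phi :: "nat \<Rightarrow> complex \<Rightarrow> real \<Rightarrow> real" where
  "phi k c x = Re (inverse ((complex_of_real x - c) ^ k))"

lemma inv_pow_aux:
  fixes u :: complex
  assumes "u \<noteq> 0"
  shows "- (of_nat (Suc j) * u ^ (Suc j - 1) * 1 * inverse ((u ^ Suc j) ^ Suc (Suc 0)))
         = - of_nat (Suc j) * inverse (u ^ Suc (Suc j))"
proof -
  have "(u ^ Suc j) ^ Suc (Suc 0) = u ^ (Suc j * Suc (Suc 0))"
    by (simp only: power_mult)
  also have "Suc j * Suc (Suc 0) = j + Suc (Suc j)" by simp
  finally have e: "(u ^ Suc j) ^ Suc (Suc 0) = u^j * u ^ Suc (Suc j)"
    by (simp only: power_add)
  have u: "u ^ j * inverse (u ^ j) = 1" using assms by simp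
  have "of_nat (Suc j) * u ^ j * 1 * inverse ((u ^ Suc j) ^ Suc (Suc 0))
      = of_nat (Suc j) * (u ^ j * inverse (u ^ j)) * inverse (u ^ Suc (Suc j))"
    unfolding e using assms by (simp add: nonzero_inverse_mult_distrib mult.assoc)
  then have "of_nat (Suc j) * u ^ j * 1 * inverse ((u ^ Suc j) ^ Suc (Suc 0))
      = of_nat (Suc j) * inverse (u ^ Suc (Suc j))" by (simp only: u mult_1_right)
  then show ?thesis unfolding diff_Suc_1 by (simp only: minus_mult_left)
qed

lemma inv_pow_deriv:
  fixes w c :: complex
  assumes "w \<noteq> c"
  shows "((\<lambda>w. inverse ((w - c) ^ k)) has_field_derivative
           - of_nat k * inverse ((w - c) ^ Suc k)) (at w)"
proof -
  have d: "((\<lambda>w. (w - c) ^ k) has_field_derivative (of_nat k * (w - c) ^ (k - 1) * 1)) (at w)"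
    by (auto intro!: derivative_eq_intros)
  have "((\<lambda>w. inverse ((w - c) ^ k)) has_field_derivative
         - ((of_nat k * (w - c) ^ (k - 1) * 1) * inverse (((w - c) ^ k) ^ Suc (Suc 0)))) (at w)"
    using assms by (intro DERIV_inverse_fun[OF d]) auto
  also have "- ((of_nat k * (w - c) ^ (k - 1) * 1) * inverse (((w - c) ^ k) ^ Suc (Suc 0)))
       = - of_nat k * inverse ((w - c) ^ Suc k)"
  proof (cases k)
    case (Suc j)
    show ?thesis unfolding Suc using inv_pow_aux[of "w - c" j] assms by simp
  qed simp
  finally show ?thesis .
qed

lemma phi_deriv:
  assumes "complex_of_real x \<noteq> c"
  shows "(phi k c has_real_derivative - real k * phi (Suc k) c x) (at x)"
proof -
  have "((\<lambda>x. Re (inverse ((complex_of_real x - c) ^ k))) has_real_derivative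
      Re (- of_nat k * inverse ((complex_of_real x - c) ^ Suc k))) (at x)"
    by (rule Re_comp_deriv[OF inv_pow_deriv[OF assms]])
  then show ?thesis unfolding phi_def[abs_def] by simp
qed

definition lnabs :: "complex \<Rightarrow> real \<Rightarrow> real" where
  "lnabs c x = ln (cmod (complex_of_real x - c))"

lemma lnabs_deriv:
  assumes "complex_of_real x \<noteq> c"
  shows "(lnabs c has_real_derivative phi 1 c x) (at x)"
proof -
  have q: "(x - Re c)^2 + (Im c)^2 > 0"
    using assms by (metis complex_eq_iff complex_of_real_def diff_self add_nonneg_nonneg
        order_less_le power2_eq_square sum_power2_eq_zero_iff Re_complex_of_real Im_complex_of_real
        zero_le_power2 eq_iff_diff_eq_0)
  have eq: "lnabs c = (\<lambda>x. ln ((x - Re c)^2 + (Im c)^2) / 2)"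
    by (rule ext) (simp add: lnabs_def cmod_def ln_sqrt add_pos_nonneg power2_eq_square ln_sqrt)
  have "((\<lambda>x. ln ((x - Re c)^2 + (Im c)^2) / 2) has_real_derivative
     (x - Re c) / ((x - Re c)^2 + (Im c)^2)) (at x)"
    using q by (auto intro!: derivative_eq_intros simp: field_simps power2_eq_square)
  moreover have "phi 1 c x = (x - Re c) / ((x - Re c)^2 + (Im c)^2)"
    by (simp add: phi_def power2_eq_square)
  ultimately show ?thesis unfolding eq by simp
qed


lemma sumlist_deriv:
  assumes "\<And>c. c \<in> set cs \<Longrightarrow> (F c has_real_derivative F' c) (at x)"
  shows "((\<lambda>x. \<Sum>c\<leftarrow>cs. F c x) has_real_derivative (\<Sum>c\<leftarrow>cs. F' c)) (at x)"
  using assms by (induction cs) (auto intro!: derivative_eq_intros)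

lemma deriv_on_open:
  assumes "open S" "x \<in> S" "\<And>y. y \<in> S \<Longrightarrow> F y = G y" "(G has_real_derivative D) (at x)"
  shows "deriv F x = D"
proof -
  have "deriv F x = deriv G x"
    by (rule deriv_cong_ev) (use assms in \<open>auto intro: eventually_nhds_in_open eventually_mono\<close>)
  also have "\<dots> = D" by (rule DERIV_imp_deriv[OF assms(4)])
  finally show ?thesis .
qed

definition Ssum :: "complex list \<Rightarrow> complex list \<Rightarrow> nat \<Rightarrow> real \<Rightarrow> real" where
  "Ssum z p k x = (\<Sum>c\<leftarrow>z. phi k c x) - (\<Sum>c\<leftarrow>p. phi k c x)"

definition Lfun :: "real \<Rightarrow> complex list \<Rightarrow> complex list \<Rightarrow> real \<Rightarrow> real" where
  "Lfun K z p x = ln \<bar>K\<bar> + (\<Sum>c\<leftarrow>z. lnabs c x) - (\<Sum>c\<leftarrow>p. lnabs c x)"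

lemma Ssum_deriv:
  assumes "\<And>c. c \<in> set z \<union> set p \<Longrightarrow> complex_of_real x \<noteq> c"
  shows "(Ssum z p k has_real_derivative - real k * Ssum z p (Suc k) x) (at x)"
proof -
  have "((\<lambda>x. (\<Sum>c\<leftarrow>z. phi k c x) - (\<Sum>c\<leftarrow>p. phi k c x)) has_real_derivative
     (\<Sum>c\<leftarrow>z. (- real k) * phi (Suc k) c x) - (\<Sum>c\<leftarrow>p. (- real k) * phi (Suc k) c x)) (at x)"
    by (intro DERIV_diff sumlist_deriv phi_deriv) (use assms in auto)
  then have "((\<lambda>x. (\<Sum>c\<leftarrow>z. phi k c x) - (\<Sum>c\<leftarrow>p. phi k c x)) has_real_derivative
     (- real k) * (\<Sum>c\<leftarrow>z. phi (Suc k) c x) - (- real k) * (\<Sum>c\<leftarrow>p. phi (Suc k) c x)) (at x)"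
    by (simp only: sum_list_const_mult)
  then show ?thesis unfolding Ssum_def[abs_def] by (simp only: right_diff_distrib)
qed

lemma Lfun_deriv:
  assumes "\<And>c. c \<in> set z \<union> set p \<Longrightarrow> complex_of_real x \<noteq> c"
  shows "(Lfun K z p has_real_derivative Ssum z p 1 x) (at x)"
proof -
  have "((\<lambda>x. ln \<bar>K\<bar> + (\<Sum>c\<leftarrow>z. lnabs c x) - (\<Sum>c\<leftarrow>p. lnabs c x)) has_real_derivative
     0 + (\<Sum>c\<leftarrow>z. phi 1 c x) - (\<Sum>c\<leftarrow>p. phi 1 c x)) (at x)"
    by (intro DERIV_diff DERIV_add DERIV_const sumlist_deriv lnabs_deriv) (use assms in auto)
  then show ?thesis unfolding Lfun_def[abs_def] Ssum_def by simp
qed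

lemma iter_deriv:
  assumes S: "open S" and nz: "\<And>y c. y \<in> S \<Longrightarrow> c \<in> set z \<union> set p \<Longrightarrow> complex_of_real y \<noteq> c"
    and F: "\<And>y. y \<in> S \<Longrightarrow> F y = Lfun K z p y"
  shows "\<forall>x\<in>S. (deriv ^^ Suc k) F x = (-1) ^ k * fact k * Ssum z p (Suc k) x"
proof (induction k)
  case 0
  show ?case
  proof
    fix x assume x: "x \<in> S"
    show "(deriv ^^ Suc 0) F x = (-1) ^ 0 * fact 0 * Ssum z p (Suc 0) x"
      using deriv_on_open[OF S x F Lfun_deriv[OF nz[OF x]]] by simp
  qed
next
  case (Suc k)
  show ?case
  proof
    fix x assume x: "x \<in> S"
    have D: "((\<lambda>y. (-1)^k * fact k * Ssum z p (Suc k) y) has_real_derivative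
        (-1) ^ k * fact k * (- real (Suc k) * Ssum z p (Suc (Suc k)) x)) (at x)"
      by (rule DERIV_cmult[OF Ssum_deriv]) (rule nz[OF x])
    have "(deriv ^^ Suc (Suc k)) F x = deriv ((deriv ^^ Suc k) F) x" by simp
    also have "\<dots> = (-1) ^ k * fact k * (- real (Suc k) * Ssum z p (Suc (Suc k)) x)"
      by (rule deriv_on_open[OF S x _ D]) (use Suc.IH in auto)
    also have "\<dots> = (-1) ^ Suc k * fact (Suc k) * Ssum z p (Suc (Suc k)) x"
      by (simp add: algebra_simps)
    finally show "(deriv ^^ Suc (Suc k)) F x = (-1) ^ Suc k * fact (Suc k) * Ssum z p (Suc (Suc k)) x" .
  qed
qed


lemma open_abscissa: "open (abscissa_interval p)"
  by (simp add: abscissa_interval_def)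

lemma abscissa_gt:
  assumes "x \<in> abscissa_interval p" "c \<in> set p"
  shows "Re c < x"
proof -
  have "p \<noteq> []" using assms by auto
  then have "x > Max (Re ` set p)" using assms by (simp add: abscissa_interval_def)
  moreover have "Re c \<le> Max (Re ` set p)" using assms(2) by (intro Max_ge) auto
  ultimately show ?thesis by simp
qed

lemma poly_roots_poly: "poly (roots_poly r) w = (\<Prod>c\<leftarrow>r. w - c)"
  by (induction r) (auto simp: roots_poly_def algebra_simps)

lemma prod_real:
  assumes "\<forall>k. coeff (roots_poly r) k \<in> \<real>"
  shows "(\<Prod>c\<leftarrow>r. complex_of_real x - c) \<in> \<real>"
proof -
  have "(\<Prod>c\<leftarrow>r. complex_of_real x - c) = poly (roots_poly r) (complex_of_real x)"
    by (simp add: poly_roots_poly)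
  also have "\<dots> = (\<Sum>i\<le>degree (roots_poly r). coeff (roots_poly r) i * complex_of_real x ^ i)"
    by (simp add: poly_altdef)
  also have "\<dots> \<in> \<real>" using assms by (intro sum_in_Reals Reals_mult Reals_power) auto
  finally show ?thesis .
qed

lemma norm_prod_list_map: "cmod (\<Prod>c\<leftarrow>r. f c) = (\<Prod>c\<leftarrow>r. cmod (f c))"
  by (induction r) (auto simp: norm_mult)

lemma prod_list_pos: "(\<And>c. c \<in> set r \<Longrightarrow> (g c::real) > 0) \<Longrightarrow> (\<Prod>c\<leftarrow>r. g c) > 0"
  by (induction r) auto

lemma ln_prod_list: "(\<And>c. c \<in> set r \<Longrightarrow> (g c::real) > 0) \<Longrightarrow> ln (\<Prod>c\<leftarrow>r. g c) = (\<Sum>c\<leftarrow>r. ln (g c))"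
proof (induction r)
  case (Cons a r)
  have ga: "g a > 0" and P: "(\<Prod>c\<leftarrow>r. g c) > 0" using Cons.prems by (auto intro!: prod_list_pos)
  show ?case using ln_mult_pos[OF ga P] Cons.IH Cons.prems by simp
qed simp

locale setting =
  fixes K :: real and z p :: "complex list"
  assumes Kne: "K \<noteq> 0"
    and zr: "\<forall>k. coeff (roots_poly z) k \<in> \<real>"
    and pr: "\<forall>k. coeff (roots_poly p) k \<in> \<real>"
begin

definition "f x = Re (rat_fun K z p (complex_of_real x))"
abbreviation "I \<equiv> abscissa_interval p"

lemma H_real: "rat_fun K z p (complex_of_real x) \<in> \<real>"
  unfolding rat_fun_def using prod_real[OF zr] prod_real[OF pr]
  by (intro Reals_divide Reals_mult) auto

lemma f_pos_facts:
  assumes "f x > 0"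
  shows "\<And>c. c \<in> set z \<union> set p \<Longrightarrow> complex_of_real x \<noteq> c"
    and "ln (f x) = Lfun K z p x"
proof -
  let ?Z = "\<Prod>c\<leftarrow>z. complex_of_real x - c" and ?P = "\<Prod>c\<leftarrow>p. complex_of_real x - c"
  have H: "rat_fun K z p (complex_of_real x) = complex_of_real (f x)"
    using H_real[of x] unfolding f_def by (simp add: Reals_def)
  have fx: "f x = cmod (rat_fun K z p (complex_of_real x))"
    using assms H by (metis abs_of_pos norm_of_real)
  have "rat_fun K z p (complex_of_real x) \<noteq> 0" using H assms by simp
  then have Z: "?Z \<noteq> 0" and P: "?P \<noteq> 0" by (auto simp: rat_fun_def)
  show ne: "complex_of_real x \<noteq> c" if "c \<in> set z \<union> set p" for c
    using Z P that by (auto simp: prod_list_zero_iff)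
  have pz: "cmod (complex_of_real x - c) > 0" if "c \<in> set z" for c using ne that by auto
  have pp: "cmod (complex_of_real x - c) > 0" if "c \<in> set p" for c using ne that by auto
  have "f x = \<bar>K\<bar> * (\<Prod>c\<leftarrow>z. cmod (complex_of_real x - c)) / (\<Prod>c\<leftarrow>p. cmod (complex_of_real x - c))"
    unfolding fx rat_fun_def by (simp add: norm_mult norm_divide norm_prod_list_map)
  also have "ln \<dots> = ln \<bar>K\<bar> + (\<Sum>c\<leftarrow>z. lnabs c x) - (\<Sum>c\<leftarrow>p. lnabs c x)"
  proof -
    let ?A = "\<Prod>c\<leftarrow>z. cmod (complex_of_real x - c)" and ?B = "\<Prod>c\<leftarrow>p. cmod (complex_of_real x - c)"
    have A: "?A > 0" using pz by (intro prod_list_pos) auto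
    have B: "?B > 0" using pp by (intro prod_list_pos) auto
    have k: "\<bar>K\<bar> > 0" using Kne by simp
    have "ln (\<bar>K\<bar> * ?A / ?B) = ln \<bar>K\<bar> + ln ?A - ln ?B"
      using ln_divide_pos[OF mult_pos_pos[OF k A] B] ln_mult_pos[OF k A] by simp
    moreover have "ln ?A = (\<Sum>c\<leftarrow>z. lnabs c x)"
      unfolding lnabs_def by (rule ln_prod_list) (use pz in auto)
    moreover have "ln ?B = (\<Sum>c\<leftarrow>p. lnabs c x)"
      unfolding lnabs_def by (rule ln_prod_list) (use pp in auto)
    ultimately show ?thesis by simp
  qed
  finally show "ln (f x) = Lfun K z p x" by (simp add: Lfun_def)
qed

lemma LCM_char:
  assumes pos: "\<forall>x\<in>I. f x > 0"
  shows "LCM_on f I \<longleftrightarrow> (\<forall>k. \<forall>x\<in>I. Ssum z p (Suc k) x \<le> 0)"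
proof -
  have it: "\<forall>x\<in>I. (deriv ^^ Suc k) (\<lambda>x. ln (f x)) x = (-1) ^ k * fact k * Ssum z p (Suc k) x" for k
    by (rule iter_deriv[OF open_abscissa]) (use pos f_pos_facts in auto)
  have e: "(-1::real) ^ Suc k * ((-1) ^ k * fact k * s) = - (fact k * s)" for k s
    by (simp add: algebra_simps flip: power_add)
  have "(\<forall>k::nat. k \<ge> 1 \<longrightarrow> (\<forall>s\<in>I. (-1) ^ k * (deriv ^^ k) (\<lambda>x. ln (f x)) s \<ge> 0))
     \<longleftrightarrow> (\<forall>k. \<forall>s\<in>I. (-1) ^ Suc k * (deriv ^^ Suc k) (\<lambda>x. ln (f x)) s \<ge> 0)"
  proof
    assume A: "\<forall>k::nat. k \<ge> 1 \<longrightarrow> (\<forall>s\<in>I. (-1) ^ k * (deriv ^^ k) (\<lambda>x. ln (f x)) s \<ge> 0)"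
    show "\<forall>k. \<forall>s\<in>I. (-1) ^ Suc k * (deriv ^^ Suc k) (\<lambda>x. ln (f x)) s \<ge> 0"
    proof (intro allI)
      fix k
      show "\<forall>s\<in>I. (-1) ^ Suc k * (deriv ^^ Suc k) (\<lambda>x. ln (f x)) s \<ge> 0"
        using A[rule_format, of "Suc k"] by simp
    qed
  next
    assume B: "\<forall>k. \<forall>s\<in>I. (-1) ^ Suc k * (deriv ^^ Suc k) (\<lambda>x. ln (f x)) s \<ge> 0"
    show "\<forall>k::nat. k \<ge> 1 \<longrightarrow> (\<forall>s\<in>I. (-1) ^ k * (deriv ^^ k) (\<lambda>x. ln (f x)) s \<ge> 0)"
    proof (intro allI impI)
      fix k :: nat assume "k \<ge> 1"
      then obtain j where "k = Suc j" by (cases k) auto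
      then show "\<forall>s\<in>I. (-1) ^ k * (deriv ^^ k) (\<lambda>x. ln (f x)) s \<ge> 0" using B by blast
    qed
  qed
  also have "\<dots> \<longleftrightarrow> (\<forall>k. \<forall>x\<in>I. Ssum z p (Suc k) x \<le> 0)"
  proof -
    have "(-1) ^ Suc k * (deriv ^^ Suc k) (\<lambda>x. ln (f x)) s \<ge> 0 \<longleftrightarrow> Ssum z p (Suc k) s \<le> 0"
      if "s \<in> I" for k s
    proof -
      have "(-1) ^ Suc k * (deriv ^^ Suc k) (\<lambda>x. ln (f x)) s = - (fact k * Ssum z p (Suc k) s)"
        using it[of k] that e[of k "Ssum z p (Suc k) s"] by simp
      moreover have "fact k * Ssum z p (Suc k) s \<le> fact k * 0 \<longleftrightarrow> Ssum z p (Suc k) s \<le> 0"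
        by (rule mult_le_cancel_left_pos) simp
      ultimately show ?thesis by simp
    qed
    then show ?thesis by blast
  qed
  finally show ?thesis using pos unfolding LCM_on_def by blast
qed

end


lemma prod_lim: "((\<lambda>x::real. \<Prod>c\<leftarrow>r. 1 - c / complex_of_real x) \<longlongrightarrow> 1) at_top"
proof (induction r)
  case Nil then show ?case by simp
next
  case (Cons a r)
  have "((\<lambda>x::real. a / complex_of_real x) \<longlongrightarrow> 0) at_top"
    by (rule tendsto_divide_0[OF tendsto_const filterlim_of_real_at_infinity])
  then have "((\<lambda>x::real. 1 - a / complex_of_real x) \<longlongrightarrow> 1 - 0) at_top"
    by (intro tendsto_diff tendsto_const)
  from tendsto_mult[OF this Cons.IH] show ?case by simp
qed

lemma prod_factor: "(w::complex) \<noteq> 0 \<Longrightarrow> (\<Prod>c\<leftarrow>r. w - c) = w ^ length r * (\<Prod>c\<leftarrow>r. 1 - c / w)"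
proof (induction r)
  case (Cons a r)
  have e: "w * (1 - a / w) = w - a" using Cons.prems by (simp add: field_simps)
  have "(\<Prod>c\<leftarrow>a # r. w - c) = (w * (1 - a / w)) * (w ^ length r * (\<Prod>c\<leftarrow>r. 1 - c / w))"
    using Cons.IH Cons.prems by (simp add: e)
  also have "\<dots> = w ^ length (a # r) * (\<Prod>c\<leftarrow>a # r. 1 - c / w)"
    by (simp add: ac_simps)
  finally show ?case .
qed simp

lemma aux_div: "(k::complex) * (a * b) / (c * d) = (k * a / c) * (b / d)"
  by (metis times_divide_times_eq mult.assoc)

lemma Re_mult_of_real: "Re (complex_of_real r * w) = r * Re w"
  by simp

context setting begin

lemma f_eventually: "eventually (\<lambda>x. \<exists>q>0. f x = K * q) at_top"
proof -
  let ?Q = "\<lambda>x::real. (\<Prod>c\<leftarrow>z. 1 - c / complex_of_real x) / (\<Prod>c\<leftarrow>p. 1 - c / complex_of_real x)"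
  have "(?Q \<longlongrightarrow> 1 / 1) at_top" by (intro tendsto_divide prod_lim) auto
  then have "((\<lambda>x. Re (?Q x)) \<longlongrightarrow> Re (1/1)) at_top" by (rule tendsto_Re)
  then have ev: "eventually (\<lambda>x. Re (?Q x) > 0) at_top"
    by (rule order_tendstoD) simp
  show ?thesis using ev eventually_gt_at_top[of 0]
  proof eventually_elim
    case (elim x)
    have xn: "complex_of_real x \<noteq> 0" using elim by simp
    have "rat_fun K z p (complex_of_real x) =
       complex_of_real K * (complex_of_real x ^ length z * (\<Prod>c\<leftarrow>z. 1 - c / complex_of_real x)) /
        (complex_of_real x ^ length p * (\<Prod>c\<leftarrow>p. 1 - c / complex_of_real x))"
      unfolding rat_fun_def using prod_factor[OF xn, of z] prod_factor[OF xn, of p] by simp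
    also have "\<dots> = (complex_of_real K * complex_of_real x ^ length z / complex_of_real x ^ length p) * ?Q x"
      by (rule aux_div)
    also have "complex_of_real K * complex_of_real x ^ length z / complex_of_real x ^ length p
        = complex_of_real (K * (x ^ length z / x ^ length p))"
      by simp
    finally have "rat_fun K z p (complex_of_real x) = complex_of_real (K * (x ^ length z / x ^ length p)) * ?Q x" .
    then have "f x = K * (x ^ length z / x ^ length p) * Re (?Q x)"
      unfolding f_def by (simp only: Re_mult_of_real)
    moreover have "x ^ length z / x ^ length p * Re (?Q x) > 0" using elim by simp
    ultimately show ?case by (metis mult.assoc)
  qed
qed

lemma K_pos_iff_eventually: "K > 0 \<longleftrightarrow> eventually (\<lambda>x. f x > 0) at_top"
proof
  assume K: "K > 0"
  show "eventually (\<lambda>x. f x > 0) at_top"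
    using f_eventually by eventually_elim (use K in auto)
next
  assume "eventually (\<lambda>x. f x > 0) at_top"
  then have "eventually (\<lambda>x. f x > 0 \<and> (\<exists>q>0. f x = K * q)) at_top"
    using f_eventually by eventually_elim auto
  then obtain N where "\<forall>x\<ge>N. f x > 0 \<and> (\<exists>q>0. f x = K * q)"
    by (auto simp: eventually_at_top_linorder)
  then have "f N > 0" "\<exists>q>0. f N = K * q" by auto
  then show "K > 0" by (auto simp: zero_less_mult_iff)
qed

lemma eventually_in_I: "eventually (\<lambda>x. x \<in> I) at_top"
proof (cases "p = []")
  case False
  show ?thesis using eventually_gt_at_top[of "Max (Re ` set p)"]
    by eventually_elim (use False in \<open>simp add: abscissa_interval_def\<close>)
qed (simp add: abscissa_interval_def)

end


lemma cexp_limit: "(\<lambda>n. (1 + w / of_nat n) ^ n) \<longlonglongrightarrow> exp (w::complex)"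
proof -
  have ev: "eventually (\<lambda>n. real n > 2 * cmod w \<and> n \<ge> 1) sequentially"
    using eventually_gt_at_top[of "nat \<lceil>2 * cmod w\<rceil>"] eventually_ge_at_top[of 1]
    by eventually_elim linarith
  have bound: "norm (of_nat n * ln (1 + w / of_nat n) - w) \<le> 2 * cmod w ^ 2 / real n"
    if n: "real n > 2 * cmod w" "n \<ge> 1" for n
  proof -
    have np: "real n > 0" using n by simp
    have nw: "cmod (w / of_nat n) = cmod w / real n" by (simp add: norm_divide)
    have small: "cmod w / real n < 1/2" using n np by (auto simp: divide_less_eq)
    have "norm (ln (1 + w / of_nat n) - w / of_nat n) \<le> cmod (w / of_nat n) ^ 2 / (1 - cmod (w / of_nat n))"
      by (rule Ln_approx_linear) (simp only: nw, use small in linarith)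
    also have "\<dots> \<le> (cmod w / real n) ^ 2 / (1/2)"
    proof -
      have s1: "1/2 \<le> 1 - cmod w / real n" using small by linarith
      have s2: "0 < 1 - cmod w / real n" using small by linarith
      show ?thesis unfolding nw by (rule divide_left_mono[OF s1]) (use s2 in auto)
    qed
    finally have b: "norm (ln (1 + w / of_nat n) - w / of_nat n) \<le> 2 * (cmod w / real n) ^ 2" by simp
    have "of_nat n * ln (1 + w / of_nat n) - w = of_nat n * (ln (1 + w / of_nat n) - w / of_nat n)"
      using np by (simp add: field_simps)
    then have "norm (of_nat n * ln (1 + w / of_nat n) - w) = real n * norm (ln (1 + w / of_nat n) - w / of_nat n)"
      by (simp add: norm_mult)
    also have "\<dots> \<le> real n * (2 * (cmod w / real n) ^ 2)"
      using b np by (intro mult_left_mono) auto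
    also have "\<dots> = 2 * cmod w ^ 2 / real n" using np by (simp add: field_simps power2_eq_square)
    finally show ?thesis .
  qed
  have "(\<lambda>n. of_nat n * ln (1 + w / of_nat n) - w) \<longlonglongrightarrow> 0"
  proof (rule Lim_null_comparison)
    show "eventually (\<lambda>n. norm (of_nat n * ln (1 + w / of_nat n) - w) \<le> 2 * cmod w ^ 2 / real n) sequentially"
      using ev by eventually_elim (use bound in auto)
    show "(\<lambda>n. 2 * cmod w ^ 2 / real n) \<longlonglongrightarrow> 0" by (rule lim_const_over_n)
  qed
  then have "(\<lambda>n. of_nat n * ln (1 + w / of_nat n) - w + w) \<longlonglongrightarrow> 0 + w"
    by (intro tendsto_add tendsto_const)
  then have "(\<lambda>n. exp (of_nat n * ln (1 + w / of_nat n))) \<longlonglongrightarrow> exp w"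
    by (intro tendsto_exp) simp
  moreover have "eventually (\<lambda>n. exp (of_nat n * ln (1 + w / of_nat n)) = (1 + w / of_nat n) ^ n) sequentially"
    using ev
  proof eventually_elim
    case (elim n)
    have "1 + w / of_nat n \<noteq> 0"
    proof
      assume "1 + w / of_nat n = 0"
      then have "w = - of_nat n" using elim by (simp add: field_simps eq_neg_iff_add_eq_0)
      then show False using elim by simp
    qed
    then show ?case by (simp add: exp_of_nat_mult)
  qed
  ultimately show ?thesis by (rule Lim_transform_eventually)
qed

lemma tendsto_sumlist:
  fixes F :: "'a \<Rightarrow> 'c \<Rightarrow> 'b::topological_monoid_add"
  assumes "\<And>c. c \<in> set cs \<Longrightarrow> ((F c) \<longlongrightarrow> L c) G"
  shows "((\<lambda>n. \<Sum>c\<leftarrow>cs. F c n) \<longlongrightarrow> (\<Sum>c\<leftarrow>cs. L c)) G"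
  using assms
proof (induction cs)
  case (Cons a cs)
  have "(F a \<longlongrightarrow> L a) G" using Cons.prems by simp
  moreover have "((\<lambda>n. \<Sum>c\<leftarrow>cs. F c n) \<longlongrightarrow> (\<Sum>c\<leftarrow>cs. L c)) G" using Cons by simp
  ultimately show ?case by (simp only: list.map sum_list.Cons) (rule tendsto_add)
qed simp

lemma phi_scale:
  assumes "x > 0"
  shows "x ^ k * phi k c x = Re (inverse ((1 - c / complex_of_real x) ^ k))"
proof -
  have xn: "complex_of_real x \<noteq> 0" using assms by simp
  have "complex_of_real (x ^ k) * inverse ((complex_of_real x - c) ^ k)
     = inverse (((complex_of_real x - c) / complex_of_real x) ^ k)"
    using xn by (simp add: power_divide field_simps)
  also have "(complex_of_real x - c) / complex_of_real x = 1 - c / complex_of_real x"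
    using xn by (simp add: field_simps)
  finally have e: "complex_of_real (x ^ k) * inverse ((complex_of_real x - c) ^ k)
     = inverse ((1 - c / complex_of_real x) ^ k)" .
  show ?thesis unfolding phi_def e[symmetric] by (simp only: Re_mult_of_real)
qed

definition gfun :: "complex list \<Rightarrow> complex list \<Rightarrow> real \<Rightarrow> real" where
  "gfun z p t = Re (\<Sum>c\<leftarrow>p. exp (c * complex_of_real t)) - Re (\<Sum>c\<leftarrow>z. exp (c * complex_of_real t))"

lemma Re_sumlist: "Re (\<Sum>c\<leftarrow>cs. F c) = (\<Sum>c\<leftarrow>cs. Re (F c))"
  by (induction cs) auto

lemma post_widder:
  assumes t: "t > 0" and ev: "eventually (\<lambda>k. Ssum z p (Suc k) (real (Suc k) / t) \<le> 0) sequentially"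
  shows "gfun z p t \<ge> 0"
proof -
  define u where "u k = (\<Sum>c\<leftarrow>p. Re (inverse ((1 + (- c * complex_of_real t) / of_nat k) ^ k)))
     - (\<Sum>c\<leftarrow>z. Re (inverse ((1 + (- c * complex_of_real t) / of_nat k) ^ k)))" for k
  have lim1: "(\<lambda>k. Re (inverse ((1 + (- c * complex_of_real t) / of_nat k) ^ k))) \<longlonglongrightarrow> Re (exp (c * complex_of_real t))" for c
  proof -
    have "(\<lambda>k. inverse ((1 + (- c * complex_of_real t) / of_nat k) ^ k)) \<longlonglongrightarrow> inverse (exp (- c * complex_of_real t))"
      by (intro tendsto_inverse cexp_limit) simp
    then show ?thesis by (intro tendsto_Re) (simp add: exp_minus)
  qed
  have "u \<longlonglongrightarrow> (\<Sum>c\<leftarrow>p. Re (exp (c * complex_of_real t))) - (\<Sum>c\<leftarrow>z. Re (exp (c * complex_of_real t)))"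
    unfolding u_def by (intro tendsto_diff tendsto_sumlist lim1)
  then have lim: "(\<lambda>k. u (Suc k)) \<longlonglongrightarrow> gfun z p t"
    unfolding gfun_def Re_sumlist by (rule LIMSEQ_Suc)
  have "eventually (\<lambda>k. u (Suc k) \<ge> 0) sequentially"
    using ev
  proof eventually_elim
    case (elim k)
    define x where "x = real (Suc k) / t"
    have xp: "x > 0" using t by (simp add: x_def)
    have e: "1 - c / complex_of_real x = 1 + (- c * complex_of_real t) / of_nat (Suc k)" for c
      using t by (simp add: x_def field_simps)
    have tt: "Re (inverse ((1 + (- c * complex_of_real t) / of_nat (Suc k)) ^ Suc k)) = x ^ Suc k * phi (Suc k) c x" for c
      using phi_scale[OF xp, of "Suc k" c] e[of c] by simp
    have "u (Suc k) = (\<Sum>c\<leftarrow>p. x ^ Suc k * phi (Suc k) c x) - (\<Sum>c\<leftarrow>z. x ^ Suc k * phi (Suc k) c x)"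
      unfolding u_def by (simp only: tt)
    also have "\<dots> = - (x ^ Suc k * Ssum z p (Suc k) x)"
      unfolding sum_list_const_mult Ssum_def by (simp add: algebra_simps)
    finally have "u (Suc k) = - (x ^ Suc k * Ssum z p (Suc k) x)" .
    moreover have "x ^ Suc k * Ssum z p (Suc k) x \<le> 0"
      using elim xp unfolding x_def[symmetric] by (simp add: mult_nonneg_nonpos)
    ultimately show ?case by simp
  qed
  then show ?thesis using lim by (intro tendsto_lowerbound[OF lim]) auto
qed

lemma gfun_zero_limit: "(\<lambda>j. gfun z p (1 / real (Suc j))) \<longlonglongrightarrow> gfun z p 0"
proof -
  have l: "(\<lambda>j. 1 / real (Suc j)) \<longlonglongrightarrow> 0"
    using LIMSEQ_Suc[OF lim_inverse_n'] by simp
  have "(\<lambda>j. exp (c * complex_of_real (1 / real (Suc j)))) \<longlonglongrightarrow> exp (c * complex_of_real 0)" for c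
    by (intro tendsto_exp tendsto_mult tendsto_const tendsto_of_real l)
  then show ?thesis unfolding gfun_def
    by (intro tendsto_diff tendsto_Re tendsto_sumlist)
qed


fun Fk :: "nat \<Rightarrow> complex \<Rightarrow> complex \<Rightarrow> complex" where
  "Fk 0 w t = - exp (- w * t) / w"
| "Fk (Suc k) w t = - (t ^ Suc k * exp (- w * t)) / w + of_nat (Suc k) / w * Fk k w t"

lemma Fk_deriv:
  assumes "w \<noteq> 0"
  shows "(Fk k w has_field_derivative t ^ k * exp (- w * t)) (at t)"
proof (induction k)
  case 0
  show ?case unfolding Fk.simps[abs_def] using assms
    by (auto intro!: derivative_eq_intros simp: field_simps)
next
  case (Suc k)
  have "((\<lambda>t. - (t ^ Suc k * exp (- w * t)) / w + of_nat (Suc k) / w * Fk k w t) has_field_derivative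
      t ^ Suc k * exp (- w * t)) (at t)"
    using assms by (auto intro!: derivative_eq_intros Suc.IH simp: field_simps) (cases k; simp)
  then show ?case unfolding Fk.simps[abs_def] by simp
qed

lemma Fk_zero:
  assumes "w \<noteq> 0" shows "Fk k w 0 = - fact k / w ^ Suc k"
proof (induction k)
  case (Suc k)
  have "Fk (Suc k) w 0 = of_nat (Suc k) / w * (- fact k / w ^ Suc k)"
    by (simp only: Fk.simps Suc.IH) simp
  also have "\<dots> = - fact (Suc k) / w ^ Suc (Suc k)"
    using assms by (simp add: field_simps)
  finally show ?case .
qed simp

lemma real_pow_exp_lim:
  fixes a :: real assumes a: "a > 0"
  shows "((\<lambda>T. T ^ j * exp (- a * T)) \<longlongrightarrow> 0) at_top"
proof -
  have lim: "filterlim (\<lambda>T. a * T) at_top at_top"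
    by (rule filterlim_tendsto_pos_mult_at_top[OF tendsto_const a filterlim_ident])
  have "((\<lambda>T. (a * T) ^ j / exp (a * T)) \<longlongrightarrow> 0) at_top"
    by (rule filterlim_compose[OF tendsto_power_div_exp_0 lim])
  then have "((\<lambda>T. (a * T) ^ j / exp (a * T) / a ^ j) \<longlongrightarrow> 0 / a ^ j) at_top"
    by (intro tendsto_divide tendsto_const) (use a in auto)
  moreover have "(a * T) ^ j / exp (a * T) / a ^ j = T ^ j * exp (- a * T)" for T
    using a by (simp add: power_mult_distrib exp_minus field_simps)
  ultimately show ?thesis by simp
qed

lemma cpow_exp_lim:
  assumes "Re w > 0"
  shows "((\<lambda>T::real. complex_of_real T ^ j * exp (- w * complex_of_real T)) \<longlongrightarrow> 0) at_top"
proof -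
  have "((\<lambda>T. T ^ j * exp (- Re w * T)) \<longlongrightarrow> 0) at_top" by (rule real_pow_exp_lim[OF assms])
  moreover have "eventually (\<lambda>T. T ^ j * exp (- Re w * T) = norm (complex_of_real T ^ j * exp (- w * complex_of_real T))) at_top"
    using eventually_ge_at_top[of 0] by eventually_elim (simp add: norm_mult norm_power)
  ultimately have "((\<lambda>T. norm (complex_of_real T ^ j * exp (- w * complex_of_real T))) \<longlongrightarrow> 0) at_top"
    by (rule Lim_transform_eventually)
  then show ?thesis by (simp only: tendsto_norm_zero_iff)
qed

lemma Fk_lim:
  assumes "Re w > 0"
  shows "((\<lambda>T::real. Fk k w (complex_of_real T)) \<longlongrightarrow> 0) at_top"
proof (induction k)
  case 0
  have "((\<lambda>T::real. - (complex_of_real T ^ 0 * exp (- w * complex_of_real T)) / w) \<longlongrightarrow> - 0 / w) at_top"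
    using assms by (intro tendsto_divide tendsto_minus cpow_exp_lim assms tendsto_const) auto
  then show ?case by simp
next
  case (Suc k)
  have "((\<lambda>T::real. - (complex_of_real T ^ Suc k * exp (- w * complex_of_real T)) / w
      + of_nat (Suc k) / w * Fk k w (complex_of_real T)) \<longlongrightarrow> - 0 / w + of_nat (Suc k) / w * 0) at_top"
    by (intro tendsto_add tendsto_mult tendsto_divide tendsto_minus cpow_exp_lim assms tendsto_const Suc.IH) (use assms in auto)
  then show ?case by simp
qed


lemma sumlist_cderiv:
  assumes "\<And>c. c \<in> set cs \<Longrightarrow> (F c has_field_derivative F' c) (at t)"
  shows "((\<lambda>t. \<Sum>c\<leftarrow>cs. F c t) has_field_derivative (\<Sum>c\<leftarrow>cs. F' c)) (at t)"
  using assms by (induction cs) (auto intro!: derivative_eq_intros)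

lemma Re_sum_map_comm: "(\<Sum>c\<leftarrow>cs. Re (F c)) = Re (\<Sum>c\<leftarrow>cs. F c)"
  by (induction cs) auto

lemma laplace_nonneg:
  assumes cz: "\<And>c. c \<in> set z \<union> set p \<Longrightarrow> Re c < x"
    and g: "\<And>t. t \<ge> 0 \<Longrightarrow> gfun z p t \<ge> 0"
  shows "Ssum z p (Suc k) x \<le> 0"
proof -
  define Gc where "Gc t = (\<Sum>c\<leftarrow>p. Fk k (complex_of_real x - c) t) - (\<Sum>c\<leftarrow>z. Fk k (complex_of_real x - c) t)" for t
  define G where "G T = Re (Gc (complex_of_real T))" for T
  have w0: "complex_of_real x - c \<noteq> 0" if "c \<in> set z \<union> set p" for c
    using cz[OF that] by (auto simp: complex_eq_iff)
  have wpos: "Re (complex_of_real x - c) > 0" if "c \<in> set z \<union> set p" for c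
    using cz[OF that] by simp
  define D where "D t = (\<Sum>c\<leftarrow>p. t ^ k * exp (- (complex_of_real x - c) * t)) -
      (\<Sum>c\<leftarrow>z. t ^ k * exp (- (complex_of_real x - c) * t))" for t
  have dGc: "(Gc has_field_derivative D t) (at t)" for t
    unfolding Gc_def[abs_def] D_def
    by (intro DERIV_diff sumlist_cderiv Fk_deriv) (use w0 in auto)
  have dG: "(G has_real_derivative Re (D (complex_of_real T))) (at T)" for T
    unfolding G_def by (rule Re_comp_deriv[OF dGc])
  have Dval: "Re (D (complex_of_real T)) = T ^ k * exp (- x * T) * gfun z p T" for T
  proof -
    have e: "complex_of_real T ^ k * exp (- (complex_of_real x - c) * complex_of_real T)
      = complex_of_real (T ^ k * exp (- x * T)) * exp (c * complex_of_real T)" for c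
    proof -
      have "- (complex_of_real x - c) * complex_of_real T = complex_of_real (- x * T) + c * complex_of_real T"
        by (simp add: algebra_simps)
      then have a: "exp (- (complex_of_real x - c) * complex_of_real T) = complex_of_real (exp (- x * T)) * exp (c * complex_of_real T)"
        by (simp only: exp_add exp_of_real)
      show ?thesis unfolding a by (simp add: mult.assoc)
    qed
    have "D (complex_of_real T) = complex_of_real (T ^ k * exp (- x * T)) *
       ((\<Sum>c\<leftarrow>p. exp (c * complex_of_real T)) - (\<Sum>c\<leftarrow>z. exp (c * complex_of_real T)))"
      unfolding D_def e sum_list_const_mult right_diff_distrib ..
    then show ?thesis unfolding gfun_def by (simp only: Re_mult_of_real minus_complex.sel)
  qed
  have mono: "G 0 \<le> G T" if T: "T \<ge> 0" for T
  proof (rule deriv_nonneg_imp_mono[OF dG])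
    fix t assume "t \<in> {0..T}"
    then have "t \<ge> 0" by simp
    then show "Re (D (complex_of_real t)) \<ge> 0" unfolding Dval
      using g[of t] by simp
  qed (use T in auto)
  have l1: "((\<lambda>T. \<Sum>c\<leftarrow>cs. Fk k (complex_of_real x - c) (complex_of_real T)) \<longlongrightarrow> (\<Sum>c\<leftarrow>cs. 0)) at_top"
    if "set cs \<subseteq> set z \<union> set p" for cs
    by (intro tendsto_sumlist Fk_lim wpos) (use that in auto)
  have lim: "(G \<longlongrightarrow> Re ((\<Sum>c\<leftarrow>p. 0) - (\<Sum>c\<leftarrow>z. 0))) at_top"
    unfolding G_def Gc_def
    by (intro tendsto_Re tendsto_diff l1) auto
  have "G 0 \<le> 0"
  proof -
    have "eventually (\<lambda>T. G 0 \<le> G T) at_top"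
      using eventually_ge_at_top[of "0::real"] by eventually_elim (rule mono)
    from tendsto_lowerbound[OF lim this] show ?thesis by simp
  qed
  moreover have "G 0 = fact k * Ssum z p (Suc k) x"
  proof -
    have f0: "Re (Fk k (complex_of_real x - c) 0) = (- fact k) * phi (Suc k) c x" if "c \<in> set z \<union> set p" for c
      unfolding Fk_zero[OF w0[OF that]] phi_def
      by (simp add: divide_inverse Re_mult_of_real[symmetric] del: Re_mult_of_real)
    have "G 0 = (\<Sum>c\<leftarrow>p. Re (Fk k (complex_of_real x - c) 0)) - (\<Sum>c\<leftarrow>z. Re (Fk k (complex_of_real x - c) 0))"
      unfolding G_def Gc_def by (simp add: Re_sum_map_comm)
    also have "\<dots> = (\<Sum>c\<leftarrow>p. (- fact k) * phi (Suc k) c x) - (\<Sum>c\<leftarrow>z. (- fact k) * phi (Suc k) c x)"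
      using f0 by (intro arg_cong2[where f="(-)"] arg_cong[where f=sum_list] map_cong) auto
    also have "\<dots> = fact k * Ssum z p (Suc k) x"
      unfolding sum_list_const_mult Ssum_def by (simp add: algebra_simps)
    finally show ?thesis .
  qed
  moreover have "fact k > (0::real)" by simp
  ultimately show ?thesis by (simp add: mult_le_0_iff)
qed


lemma sum_list_partition:
  fixes f :: "'a \<Rightarrow> 'b::comm_monoid_add"
  shows "(\<Sum>c\<leftarrow>xs. f c) = (\<Sum>c\<leftarrow>filter P xs. f c) + (\<Sum>c\<leftarrow>filter (\<lambda>c. \<not> P c) xs. f c)"
  by (induction xs) (auto simp: ac_simps)

lemma cos_near_int:
  assumes "\<bar>y - of_int j\<bar> < 1/6"
  shows "cos (2 * pi * y) \<ge> 1/2"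
proof -
  have e: "2 * pi * y = 2 * pi * (y - of_int j) + (2 * pi) * of_int j" by (simp add: algebra_simps)
  have c: "cos (2 * pi * y) = cos (2 * pi * (y - of_int j))"
    unfolding e cos_add by simp
  have "\<bar>2 * pi * (y - of_int j)\<bar> = 2 * pi * \<bar>y - of_int j\<bar>" by (simp add: abs_mult)
  also have "\<dots> \<le> 2 * pi * (1/6)" using assms by (intro mult_left_mono) auto
  finally have b: "\<bar>2 * pi * (y - of_int j)\<bar> \<le> pi / 3" by simp
  have "cos (pi / 3) \<le> cos \<bar>2 * pi * (y - of_int j)\<bar>"
    by (rule cos_monotone_0_pi_le) (use b in auto)
  then show ?thesis using c by (simp add: cos_60)
qed

lemma gfun_zero: "gfun z p 0 = real (length p) - real (length z)"
  by (simp add: gfun_def Re_sumlist sum_list_triv)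

lemma Re_exp_le: "Re (exp w) \<le> exp (Re w)"
  using abs_Re_le_cmod[of "exp w"] by simp

lemma Re_exp_ge: "Re (exp w) \<ge> - exp (Re w)"
  using abs_Re_le_cmod[of "exp w"] by simp

lemma crux:
  assumes pne: "p \<noteq> []" and g: "\<And>t. t \<ge> 0 \<Longrightarrow> gfun z p t \<ge> 0" and c0: "c \<in> set z"
  shows "Re c \<le> Max (Re ` set p)"
proof (rule ccontr)
  define \<sigma> where "\<sigma> = Max (Re ` set p)"
  assume "\<not> Re c \<le> Max (Re ` set p)"
  then have cs: "Re c > \<sigma>" unfolding \<sigma>_def by simp
  define a where "a = Max (Re ` set z)"
  have aZ: "a \<in> Re ` set z" unfolding a_def using c0 by (intro Max_in) auto
  have ale: "Re d \<le> a" if "d \<in> set z" for d unfolding a_def using that by (intro Max_ge) auto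
  have sa: "\<sigma> < a" using ale[OF c0] cs by simp
  define top where "top = filter (\<lambda>d. Re d = a) z"
  define rest where "rest = filter (\<lambda>d. \<not> Re d = a) z"
  have topne: "top \<noteq> []" using aZ unfolding top_def by (auto simp: filter_empty_conv)
  define b0 where "b0 = Max (insert \<sigma> (Re ` set rest))"
  have b0a: "b0 < a"
    unfolding b0_def using sa ale by (subst Max_less_iff) (auto simp: rest_def le_less)
  have pb: "Re d \<le> b0" if "d \<in> set p" for d
  proof -
    have "Re d \<le> \<sigma>" unfolding \<sigma>_def using that by (intro Max_ge) auto
    also have "\<sigma> \<le> b0" unfolding b0_def by (intro Max_ge) auto
    finally show ?thesis .
  qed
  have rb: "Re d \<le> b0" if "d \<in> set rest" for d
    unfolding b0_def using that by (intro Max_ge) auto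
  define n where "n = real (length p) + real (length rest)"
  have "((\<lambda>T. T ^ 0 * exp (- (a - b0) * T)) \<longlongrightarrow> 0) at_top"
    by (rule real_pow_exp_lim) (use b0a in simp)
  then have "((\<lambda>T. n * (T ^ 0 * exp (- (a - b0) * T))) \<longlongrightarrow> n * 0) at_top"
    by (intro tendsto_mult tendsto_const)
  then have "eventually (\<lambda>T. n * (T ^ 0 * exp (- (a - b0) * T)) < 1/2) at_top"
    by (intro order_tendstoD(2)) auto
  then obtain T0 where T0: "\<And>T. T \<ge> T0 \<Longrightarrow> n * exp (- (a - b0) * T) < 1/2"
    by (auto simp: eventually_at_top_linorder)
  define T1 where "T1 = max T0 1"
  have T1: "T1 \<ge> T0" "T1 \<ge> 1" unfolding T1_def by auto
  define N where "N = length top"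
  define \<theta> where "\<theta> i = Im (top ! i) * T1 / (2 * pi)" for i
  obtain q pp where q: "0 < q" and approx: "\<And>i. i < N \<Longrightarrow> \<bar>of_int q * \<theta> i - of_int (pp i)\<bar> < 1 / real 6"
    using Dirichlet_approx_simult[where \<theta>=\<theta> and N=6 and n=N] by (metis zero_less_numeral)
  define t where "t = of_int q * T1"
  have tT: "t \<ge> T1"
  proof -
    have "real_of_int q \<ge> 1" using q by simp
    then have "real_of_int q * T1 \<ge> 1 * T1" using T1 by (intro mult_right_mono) auto
    then show ?thesis unfolding t_def by simp
  qed
  have t0: "t \<ge> 0" using tT T1 by simp
  have cos_top: "cos (Im d * t) \<ge> 1/2" if dt: "d \<in> set top" for d
  proof -
    obtain i where i: "i < N" "d = top ! i" using dt unfolding N_def by (auto simp: in_set_conv_nth)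
    have "Im d * t = 2 * pi * (of_int q * \<theta> i)"
      unfolding t_def \<theta>_def i(2) by (simp add: field_simps)
    then show ?thesis using cos_near_int[of "of_int q * \<theta> i" "pp i"] approx[OF i(1)] by simp
  qed
  have P: "Re (\<Sum>d\<leftarrow>p. exp (d * complex_of_real t)) \<le> real (length p) * exp (b0 * t)"
  proof -
    have "Re (\<Sum>d\<leftarrow>p. exp (d * complex_of_real t)) = (\<Sum>d\<leftarrow>p. Re (exp (d * complex_of_real t)))"
      by (rule Re_sumlist)
    also have "\<dots> \<le> (\<Sum>d\<leftarrow>p. exp (b0 * t))"
    proof (rule sum_list_mono)
      fix d assume d: "d \<in> set p"
      have "Re (exp (d * complex_of_real t)) \<le> exp (Re d * t)" using Re_exp_le[of "d * complex_of_real t"] by simp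
      also have "\<dots> \<le> exp (b0 * t)" using pb[OF d] t0 by (simp add: mult_right_mono)
      finally show "Re (exp (d * complex_of_real t)) \<le> exp (b0 * t)" .
    qed
    also have "\<dots> = real (length p) * exp (b0 * t)" by (simp add: sum_list_triv)
    finally show ?thesis .
  qed
  have R: "(\<Sum>d\<leftarrow>rest. Re (exp (d * complex_of_real t))) \<ge> - (real (length rest) * exp (b0 * t))"
  proof -
    have "(\<Sum>d\<leftarrow>rest. - exp (b0 * t)) \<le> (\<Sum>d\<leftarrow>rest. Re (exp (d * complex_of_real t)))"
    proof (rule sum_list_mono)
      fix d assume d: "d \<in> set rest"
      have "- exp (b0 * t) \<le> - exp (Re d * t)" using rb[OF d] t0 by (simp add: mult_right_mono)
      also have "\<dots> \<le> Re (exp (d * complex_of_real t))" using Re_exp_ge[of "d * complex_of_real t"] by simp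
      finally show "- exp (b0 * t) \<le> Re (exp (d * complex_of_real t))" .
    qed
    then show ?thesis by (simp add: sum_list_triv)
  qed
  have Tp: "(\<Sum>d\<leftarrow>top. Re (exp (d * complex_of_real t))) \<ge> exp (a * t) / 2"
  proof -
    have "(\<Sum>d\<leftarrow>top. exp (a * t) / 2) \<le> (\<Sum>d\<leftarrow>top. Re (exp (d * complex_of_real t)))"
    proof (rule sum_list_mono)
      fix d assume d: "d \<in> set top"
      have ra: "Re d = a" using d unfolding top_def by simp
      have "Re (exp (d * complex_of_real t)) = exp (a * t) * cos (Im d * t)"
        by (simp add: Re_exp ra)
      also have "\<dots> \<ge> exp (a * t) * (1/2)" using cos_top[OF d] by (intro mult_left_mono) auto
      finally show "exp (a * t) / 2 \<le> Re (exp (d * complex_of_real t))" by simp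
    qed
    moreover have "(\<Sum>d\<leftarrow>top. exp (a * t) / 2) \<ge> exp (a * t) / 2"
    proof -
      have "real (length top) \<ge> 1" using topne by (cases top) auto
      then have "real (length top) * (exp (a * t) / 2) \<ge> 1 * (exp (a * t) / 2)"
        by (intro mult_right_mono) auto
      then show ?thesis by (simp add: sum_list_triv)
    qed
    ultimately show ?thesis by linarith
  qed
  have Z: "Re (\<Sum>d\<leftarrow>z. exp (d * complex_of_real t)) =
     (\<Sum>d\<leftarrow>top. Re (exp (d * complex_of_real t))) + (\<Sum>d\<leftarrow>rest. Re (exp (d * complex_of_real t)))"
    unfolding Re_sumlist top_def rest_def by (rule sum_list_partition)
  have "gfun z p t \<le> n * exp (b0 * t) - exp (a * t) / 2"
    unfolding gfun_def Z n_def using P R Tp by (simp add: algebra_simps)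
  also have "n * exp (b0 * t) = n * exp (- (a - b0) * t) * exp (a * t)"
    by (simp add: mult.assoc exp_add[symmetric] algebra_simps)
  also have "n * exp (- (a - b0) * t) * exp (a * t) < 1/2 * exp (a * t)"
    using T0[of t] tT T1 by (intro mult_strict_right_mono) auto
  finally have "gfun z p t < 0" by simp
  with g[OF t0] show False by simp
qed


lemma cont_prod: "isCont (\<lambda>x::real. \<Prod>c\<leftarrow>cs. complex_of_real x - c) y"
  by (induction cs) (auto intro!: continuous_intros)

context setting begin

lemma I_up: "x \<in> I \<Longrightarrow> y \<ge> x \<Longrightarrow> y \<in> I"
  by (auto simp: abscissa_interval_def split: if_splits)

lemma f_cont: 
  assumes "\<And>c. c \<in> set p \<Longrightarrow> complex_of_real y \<noteq> c"
  shows "isCont f y"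
proof -
  have "(\<Prod>c\<leftarrow>p. complex_of_real y - c) \<noteq> 0" using assms by (auto simp: prod_list_zero_iff)
  then have "isCont (\<lambda>x. rat_fun K z p (complex_of_real x)) y"
    unfolding rat_fun_def by (intro continuous_intros cont_prod) auto
  then show ?thesis unfolding f_def[abs_def] by (rule continuous_Re)
qed

lemma forward:
  assumes L: "LCM_on f I"
  shows "K > 0" and "\<And>t. t \<ge> 0 \<Longrightarrow> gfun z p t \<ge> 0"
proof -
  have pos: "\<forall>x\<in>I. f x > 0" using L unfolding LCM_on_def by blast
  show "K > 0" unfolding K_pos_iff_eventually
    using eventually_in_I by eventually_elim (use pos in auto)
  have S: "\<And>k x. x \<in> I \<Longrightarrow> Ssum z p (Suc k) x \<le> 0" using L LCM_char[OF pos] by blast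
  obtain X where X: "\<And>x. x \<ge> X \<Longrightarrow> x \<in> I"
    using eventually_in_I by (auto simp: eventually_at_top_linorder)
  have pw: "gfun z p t \<ge> 0" if t: "t > 0" for t
  proof (rule post_widder[OF t])
    show "eventually (\<lambda>k. Ssum z p (Suc k) (real (Suc k) / t) \<le> 0) sequentially"
      using eventually_ge_at_top[of "nat \<lceil>X * t\<rceil>"]
    proof eventually_elim
      case (elim k)
      have "real (Suc k) \<ge> X * t" using elim by linarith
      then have "real (Suc k) / t \<ge> X" using t by (simp add: pos_le_divide_eq)
      then show ?case using S X by blast
    qed
  qed
  show "gfun z p t \<ge> 0" if "t \<ge> 0" for t
  proof (cases "t = 0")
    case True
    have "gfun z p 0 \<ge> 0"
      by (rule LIMSEQ_le_const[OF gfun_zero_limit]) (use pw in auto)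
    then show ?thesis using True by simp
  next
    case False
    then show ?thesis using pw that by simp
  qed
qed

lemma backward:
  assumes K: "K > 0" and g: "\<And>t. t \<ge> 0 \<Longrightarrow> gfun z p t \<ge> 0"
  shows "LCM_on f I"
proof -
  have cz: "Re c < x" if "x \<in> I" "c \<in> set z \<union> set p" for x c
  proof (cases "p = []")
    case True
    have "gfun z p 0 \<ge> 0" using g by simp
    then have "z = []" using True by (simp add: gfun_zero)
    then show ?thesis using that True by simp
  next
    case False
    show ?thesis
    proof (cases "c \<in> set p")
      case True then show ?thesis using abscissa_gt that by blast
    next
      case cp: False
      then have cz: "c \<in> set z" using that by simp
      have "Re c \<le> Max (Re ` set p)" by (rule crux[OF False g cz])
      moreover have "x > Max (Re ` set p)" using that False by (simp add: abscissa_interval_def)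
      ultimately show ?thesis by simp
    qed
  qed
  have ne: "complex_of_real x \<noteq> c" if "x \<in> I" "c \<in> set z \<union> set p" for x c
    using cz[OF that] by auto
  have fne: "f x \<noteq> 0" if x: "x \<in> I" for x
  proof -
    have Z: "(\<Prod>c\<leftarrow>z. complex_of_real x - c) \<noteq> 0" using ne[OF x] by (auto simp: prod_list_zero_iff)
    have P: "(\<Prod>c\<leftarrow>p. complex_of_real x - c) \<noteq> 0" using ne[OF x] by (auto simp: prod_list_zero_iff)
    have H: "rat_fun K z p (complex_of_real x) \<noteq> 0" unfolding rat_fun_def using Z P Kne by simp
    have "rat_fun K z p (complex_of_real x) = complex_of_real (f x)"
      using H_real[of x] unfolding f_def by (simp add: Reals_def)
    then show ?thesis using H by simp
  qed
  have pos: "\<forall>x\<in>I. f x > 0"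
  proof (rule ccontr)
    assume "\<not> (\<forall>x\<in>I. f x > 0)"
    then obtain x0 where x0: "x0 \<in> I" "f x0 \<le> 0" by auto
    have "eventually (\<lambda>x. f x > 0) at_top" using K K_pos_iff_eventually by simp
    then obtain X where X: "\<And>x. x \<ge> X \<Longrightarrow> f x > 0" by (auto simp: eventually_at_top_linorder)
    define x1 where "x1 = max X x0"
    have x1: "f x1 > 0" "x1 \<ge> x0" using X unfolding x1_def by auto
    have "continuous_on {x0..x1} f"
    proof (intro continuous_at_imp_continuous_on ballI f_cont)
      fix y c assume "y \<in> {x0..x1}" "c \<in> set p"
      then show "complex_of_real y \<noteq> c" using ne I_up[OF x0(1)] by auto
    qed
    then obtain y where y: "y \<ge> x0" "y \<le> x1" "f y = 0"
      using IVT'[of f x0 0 x1] x0 x1 by auto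
    then show False using fne I_up[OF x0(1) y(1)] by simp
  qed
  have "\<forall>k. \<forall>x\<in>I. Ssum z p (Suc k) x \<le> 0"
    using laplace_nonneg cz g by blast
  then show ?thesis using LCM_char[OF pos] by simp
qed

end

theorem lemma1:
  fixes K :: real and z p :: "complex list"
  assumes "K \<noteq> 0"
    and "\<forall>k. coeff (roots_poly z) k \<in> \<real>"
    and "\<forall>k. coeff (roots_poly p) k \<in> \<real>"
    and "set z \<inter> set p = {}"
  shows "LCM_on (\<lambda>s. Re (rat_fun K z p (complex_of_real s))) (abscissa_interval p) \<longleftrightarrow>
    (K > 0 \<and> (\<forall>t::real. t \<ge> 0 \<longrightarrow>
       Re (\<Sum>pi\<leftarrow>p. exp (pi * complex_of_real t)) \<ge> Re (\<Sum>zi\<leftarrow>z. exp (zi * complex_of_real t))))"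
proof -
  interpret setting K z p using assms by unfold_locales auto
  have fe: "(\<lambda>s. Re (rat_fun K z p (complex_of_real s))) = f" by (simp add: f_def[abs_def])
  have ge: "Re (\<Sum>pi\<leftarrow>p. exp (pi * complex_of_real t)) \<ge> Re (\<Sum>zi\<leftarrow>z. exp (zi * complex_of_real t))
       \<longleftrightarrow> gfun z p t \<ge> 0" for t
    by (simp add: gfun_def)
  show ?thesis unfolding fe ge using forward backward by blast
qed


end
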